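(* Let $T$ be a CPTP map on $\mathfrak{H}(\mathcal{H})$, $\mathcal{H}=\mathcal{H}_S\oplus\mathcal{H}_R$ orthogonal, with $\mathcal{H}_S=\bigoplus_{i=1}^K\mathcal{H}_{S_i}$ an orthogonal decomposition into invariant subspaces, and assume moreover that $\mathcal{H}_S$ is GAS. Then $\mathrm{id}-T_R$ is invertible on $\mathfrak{H}_R$ and for every density operator $\rho$ and every $i$, $$\lim_{n\to\infty}\mathrm{Tr}(\Pi_{S_i}T^n(\rho))=\mathrm{Tr}(\Pi_{S_i}\rho_S)+\mathrm{Tr}\big(\Pi_{S_i}\,T_{SR}\big((\mathrm{id}-T_R)^{-1}(\rho_R)\big)\big),$$ where $\rho_S=\Pi_S\rho\Pi_S$ and $\rho_R=\Pi_R\rho\Pi_R$.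
   Context: $\mathcal{H}$ is a finite-dimensional complex Hilbert space; $T$ is CPTP: $T(\rho)=\sum_kM_k\rho M_k^\dagger$, $\sum_kM_k^\dagger M_k=I$. A subspace is invariant for $T$ if every PSD $\rho$ supported in it is mapped to an operator supported in it. $\Pi_S,\Pi_R,\Pi_{S_i}$ are the orthogonal projections onto $\mathcal{H}_S,\mathcal{H}_R,\mathcal{H}_{S_i}$. An invariant $\mathcal{H}_S$ is GAS if $\lim_n\|T^n(\rho)-\Pi_ST^n(\rho)\Pi_S\|=0$ for every density operator $\rho$. $\mathfrak{H}_R$ denotes the Hermitian operators $A$ with $A=\Pi_RA\Pi_R$; $T_R:\mathfrak{H}_R\to\mathfrak{H}_R$, $T_R(A)=\Pi_RT(A)\Pi_R$; $T_{SR}:\mathfrak{H}_R\to$ (Hermitian operators supported on $\mathcal{H}_S$), $T_{SR}(A)=\Pi_ST(A)\Pi_S$. *)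

theory Defs
  imports "HOL-Analysis.Analysis"
begin

type_synonym 'n cmat = "complex^'n^'n"

definition madj :: "'n::finite cmat \<Rightarrow> 'n cmat" where
  "madj A = (\<chi> i j. cnj (A $ j $ i))"

definition hermitian :: "'n::finite cmat \<Rightarrow> bool" where
  "hermitian A \<longleftrightarrow> madj A = A"

definition cinner :: "complex^'n::finite \<Rightarrow> complex^'n \<Rightarrow> complex" where
  "cinner v w = (\<Sum>i\<in>UNIV. cnj (v $ i) * w $ i)"

definition psd :: "'n::finite cmat \<Rightarrow> bool" where
  "psd A \<longleftrightarrow> hermitian A \<and> (\<forall>v. 0 \<le> Re (cinner v (A *v v)))"

definition density :: "'n::finite cmat \<Rightarrow> bool" where
  "density \<rho> \<longleftrightarrow> psd \<rho> \<and> trace \<rho> = 1"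

definition cptp :: "('n::finite cmat \<Rightarrow> 'n cmat) \<Rightarrow> bool" where
  "cptp T \<longleftrightarrow> (\<exists>Ms :: 'n cmat list.
      T = (\<lambda>\<rho>. \<Sum>M\<leftarrow>Ms. M ** \<rho> ** madj M) \<and>
      (\<Sum>M\<leftarrow>Ms. madj M ** M) = mat 1)"

text \<open>Subspaces are represented by their orthogonal projections.\<close>
definition orth_proj :: "'n::finite cmat \<Rightarrow> bool" where
  "orth_proj P \<longleftrightarrow> P ** P = P \<and> madj P = P"

definition supported_in :: "'n::finite cmat \<Rightarrow> 'n cmat \<Rightarrow> bool" where
  "supported_in P A \<longleftrightarrow> P ** A ** P = A"

definition invariant :: "('n::finite cmat \<Rightarrow> 'n cmat) \<Rightarrow> 'n cmat \<Rightarrow> bool" where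
  "invariant T P \<longleftrightarrow> (\<forall>\<rho>. psd \<rho> \<and> supported_in P \<rho> \<longrightarrow> supported_in P (T \<rho>))"

definition GAS :: "('n::finite cmat \<Rightarrow> 'n cmat) \<Rightarrow> 'n cmat \<Rightarrow> bool" where
  "GAS T P \<longleftrightarrow> invariant T P \<and>
     (\<forall>\<rho>. density \<rho> \<longrightarrow> (\<lambda>n. norm ((T^^n) \<rho> - P ** (T^^n) \<rho> ** P)) \<longlonglongrightarrow> 0)"

definition herm_on :: "'n::finite cmat \<Rightarrow> 'n cmat set" where
  "herm_on P = {A. hermitian A \<and> A = P ** A ** P}"

definition T_R :: "('n::finite cmat \<Rightarrow> 'n cmat) \<Rightarrow> 'n cmat \<Rightarrow> 'n cmat \<Rightarrow> 'n cmat" where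
  "T_R T PR A = PR ** T A ** PR"

definition T_SR :: "('n::finite cmat \<Rightarrow> 'n cmat) \<Rightarrow> 'n cmat \<Rightarrow> 'n cmat \<Rightarrow> 'n cmat" where
  "T_SR T PS A = PS ** T A ** PS"

end

theory Submission
  imports Defs
begin


definition csc :: "complex \<Rightarrow> 'n::finite cmat \<Rightarrow> 'n cmat" where
  "csc c A = (\<chi> i j. c * A$i$j)"

definition outer :: "complex^'n::finite \<Rightarrow> complex^'n \<Rightarrow> 'n cmat" where
  "outer u w = (\<chi> i j. u$i * cnj (w$j))"

lemma csc_mult_left: "csc c A ** B = csc c (A ** B)"
  by (simp add: csc_def matrix_matrix_mult_def vec_eq_iff sum_distrib_left mult.assoc)

lemma csc_mult_right: "A ** csc c B = csc c (A ** B)"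
  by (simp add: csc_def matrix_matrix_mult_def vec_eq_iff sum_distrib_left algebra_simps)

lemma scaleR_csc: "r *\<^sub>R (A::'n::finite cmat) = csc (complex_of_real r) A"
  by (simp add: csc_def vec_eq_iff) (simp add: scaleR_conv_of_real)

lemma csc_add: "csc c (A + B) = csc c A + csc c B"
  by (simp add: csc_def vec_eq_iff algebra_simps)

lemma csc_diff: "csc c (A - B) = csc c A - csc c B"
  by (simp add: csc_def vec_eq_iff algebra_simps)

lemma csc_0[simp]: "csc c 0 = 0"
  by (simp add: csc_def vec_eq_iff)

lemma csc_csc: "csc c (csc d A) = csc (c*d) A"
  by (simp add: csc_def vec_eq_iff)

lemma csc_1[simp]: "csc 1 A = A"
  by (simp add: csc_def vec_eq_iff)

lemma madj_mult: "madj (A ** B) = madj B ** madj (A::'n::finite cmat)"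
  by (simp add: madj_def matrix_matrix_mult_def vec_eq_iff mult.commute)

lemma madj_madj[simp]: "madj (madj A) = A"
  by (simp add: madj_def vec_eq_iff)

lemma madj_add: "madj (A + B) = madj A + madj B"
  by (simp add: madj_def vec_eq_iff)

lemma madj_diff: "madj (A - B) = madj A - madj B"
  by (simp add: madj_def vec_eq_iff)

lemma madj_0[simp]: "madj 0 = 0"
  by (simp add: madj_def vec_eq_iff)

lemma madj_mat1[simp]: "madj (mat 1) = mat 1"
  by (simp add: madj_def vec_eq_iff mat_def)

lemma madj_csc: "madj (csc c A) = csc (cnj c) (madj A)"
  by (simp add: madj_def csc_def vec_eq_iff)

lemma outer_mult: "A ** outer u w ** B = outer (A *v u) (madj B *v w)"
  by (simp add: outer_def madj_def matrix_matrix_mult_def matrix_vector_mult_def vec_eq_iff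
      sum_distrib_left sum_distrib_right algebra_simps)

lemma trace_csc: "trace (csc c A) = c * trace A"
  by (simp add: trace_def csc_def sum_distrib_left)

lemma matrix_diff_ldistrib: "(A::'n::finite cmat) ** (B - C) = A ** B - A ** C"
  by (simp add: matrix_matrix_mult_def vec_eq_iff algebra_simps sum_subtractf)

lemma matrix_diff_rdistrib: "((B::'n::finite cmat) - C) ** A = B ** A - C ** A"
  by (simp add: matrix_matrix_mult_def vec_eq_iff algebra_simps sum_subtractf)

lemma matrix_add_rdistrib': "((B::'n::finite cmat) + C) ** A = B ** A + C ** A"
  by (simp add: matrix_matrix_mult_def vec_eq_iff algebra_simps sum.distrib)

lemma matrix_sum_ldistrib: "finite I \<Longrightarrow> (A::'n::finite cmat) ** (\<Sum>i\<in>I. B i :: 'n cmat) = (\<Sum>i\<in>I. A ** B i)"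
  by (induct I rule: finite_induct) (auto simp: matrix_add_ldistrib)

lemma matrix_sum_rdistrib: "finite I \<Longrightarrow> (\<Sum>i\<in>I. B i :: 'n::finite cmat) ** A = (\<Sum>i\<in>I. B i ** A)"
  by (induct I rule: finite_induct) (simp_all add: matrix_add_rdistrib')

lemma matrix_sum_list_ldistrib: "(A::'n::finite cmat) ** (\<Sum>x\<leftarrow>xs. B x :: 'n cmat) = (\<Sum>x\<leftarrow>xs. A ** B x)"
  by (induct xs) (auto simp: matrix_add_ldistrib)

lemma matrix_sum_list_rdistrib: "(\<Sum>x\<leftarrow>xs. B x :: 'n::finite cmat) ** A = (\<Sum>x\<leftarrow>xs. B x ** A)"
  by (induct xs) (simp_all add: matrix_add_rdistrib')

lemma trace_sum_list: "trace (\<Sum>x\<leftarrow>xs. B x :: 'n::finite cmat) = (\<Sum>x\<leftarrow>xs. trace (B x))"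
  by (induct xs) (auto simp: trace_add trace_0[simplified])

lemma madj_sum_list: "madj (\<Sum>x\<leftarrow>xs. B x :: 'n::finite cmat) = (\<Sum>x\<leftarrow>xs. madj (B x))"
  by (induct xs) (auto simp: madj_add)

lemma csc_sum_list: "csc c (\<Sum>x\<leftarrow>xs. B x :: 'n::finite cmat) = (\<Sum>x\<leftarrow>xs. csc c (B x))"
  by (induct xs) (auto simp: csc_add)

lemma csc_sum: "finite I \<Longrightarrow> csc c (\<Sum>x\<in>I. B x :: 'n::finite cmat) = (\<Sum>x\<in>I. csc c (B x))"
  by (induct I rule: finite_induct) (auto simp: csc_add)




lemma outer_mulv: "outer u w *v x = (cinner w x) *s u"
  by (simp add: outer_def cinner_def matrix_vector_mult_def vec_eq_iff sum_distrib_left algebra_simps)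

lemma madj_outer: "madj (outer u w) = outer w u"
  by (simp add: madj_def outer_def vec_eq_iff)

lemma cinner_scale: "cinner x (c *s u) = c * cinner x u"
  by (simp add: cinner_def sum_distrib_left algebra_simps)

lemma cinner_cnj: "cinner x u = cnj (cinner u x)"
  by (simp add: cinner_def mult.commute)

lemma psd_outer: "psd (outer u u)"
proof -
  have "0 \<le> Re (cinner v (outer u u *v v))" for v
  proof -
    have "cinner v (outer u u *v v) = cinner u v * cnj (cinner u v)"
      by (simp add: outer_mulv cinner_scale cinner_cnj[of v u])
    then show ?thesis by (simp add: complex_mult_cnj)
  qed
  then show ?thesis by (simp add: psd_def hermitian_def madj_outer)
qed

lemma trace_outer_Re: "Re (trace (outer w w)) = (\<Sum>i\<in>UNIV. (cmod (w$i))\<^sup>2)"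
  by (simp add: trace_def outer_def complex_mult_cnj cmod_def)

lemma trace_outer: "trace (outer w w) = of_real (Re (trace (outer w w)))"
  by (simp add: trace_def outer_def complex_mult_cnj complex_eq_iff)

lemma trace_outer_zero: "trace (outer w w) = 0 \<Longrightarrow> w = 0"
proof -
  assume a: "trace (outer w w) = 0"
  then have "(\<Sum>i\<in>UNIV. (cmod (w$i))\<^sup>2) = 0" using trace_outer_Re[of w] by simp
  then have "\<forall>i\<in>UNIV. (cmod (w$i))\<^sup>2 = 0"
    by (subst sum_nonneg_eq_0_iff[symmetric]) auto
  then show ?thesis by (simp add: vec_eq_iff)
qed

locale kraus =
  fixes T :: "'n::finite cmat \<Rightarrow> 'n cmat" and Ms :: "'n cmat list"
  assumes T_eq: "T = (\<lambda>\<rho>. \<Sum>M\<leftarrow>Ms. M ** \<rho> ** madj M)"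
  and complete: "(\<Sum>M\<leftarrow>Ms. madj M ** M) = mat 1"
begin

lemma T_add: "T (A + B) = T A + T B"
  unfolding T_eq by (simp add: matrix_add_ldistrib matrix_add_rdistrib' sum_list_addf)

lemma T_diff: "T (A - B) = T A - T B"
  unfolding T_eq by (simp add: matrix_diff_ldistrib matrix_diff_rdistrib sum_list_subtractf)

lemma T_csc: "T (csc c A) = csc c (T A)"
  unfolding T_eq by (simp add: csc_mult_left csc_mult_right csc_sum_list)

lemma T_0: "T 0 = 0"
  using T_diff[of 0 0] by simp

lemma T_linear: "linear T"
  by (rule linearI) (simp_all add: T_add scaleR_csc T_csc)

lemma Tn_add: "(T^^n) (A + B) = (T^^n) A + (T^^n) B"
  by (induct n) (simp_all add: T_add)

lemma Tn_diff: "(T^^n) (A - B) = (T^^n) A - (T^^n) B"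
  by (induct n) (simp_all add: T_diff)

lemma Tn_csc: "(T^^n) (csc c A) = csc c ((T^^n) A)"
  by (induct n) (simp_all add: T_csc)

lemma Tn_0: "(T^^n) 0 = 0"
  by (induct n) (simp_all add: T_0)

lemma T_madj: "madj (T A) = T (madj A)"
  unfolding T_eq by (simp add: madj_sum_list madj_mult matrix_mul_assoc)

lemma trace_T1: "trace (Z ** (M ** Y ** madj M)) = trace ((madj M ** Z ** M) ** Y)"
proof -
  have "trace (Z ** (M ** Y ** madj M)) = trace ((Z ** (M ** Y)) ** madj M)"
    by (simp add: matrix_mul_assoc)
  also have "\<dots> = trace (madj M ** (Z ** (M ** Y)))" by (rule trace_mul_sym)
  also have "\<dots> = trace ((madj M ** Z ** M) ** Y)" by (simp add: matrix_mul_assoc)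
  finally show ?thesis .
qed

lemma trace_T: "trace (Z ** T Y) = trace ((\<Sum>M\<leftarrow>Ms. madj M ** Z ** M) ** Y)"
  unfolding T_eq matrix_sum_list_ldistrib matrix_sum_list_rdistrib trace_sum_list trace_T1 ..

end




lemma Re_sum_list: "Re (\<Sum>x\<leftarrow>xs. f x) = (\<Sum>x\<leftarrow>xs. Re (f x))"
  by (induct xs) auto

context kraus begin

lemma inv_kraus:
  assumes P: "orth_proj P" and inv: "invariant T P" and M: "M \<in> set Ms"
  shows "M ** P = P ** M ** P"
proof -
  define Q where "Q = mat 1 - P"
  have PP: "P ** P = P" and aP: "madj P = P" using P by (auto simp: orth_proj_def)
  have QP: "Q ** P = 0" by (simp add: Q_def matrix_diff_rdistrib PP)
  have PQ: "P ** Q = 0" by (simp add: Q_def matrix_diff_ldistrib PP)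
  have aQ: "madj Q = Q" by (simp add: Q_def madj_diff aP)
  have "(Q ** M ** P) *v v = 0" for v
  proof -
    define u where "u = P *v v"
    have Pu: "P *v u = u" by (simp add: u_def matrix_vector_mul_assoc PP)
    have "supported_in P (outer u u)"
      by (simp add: supported_in_def outer_mult aP Pu)
    then have sup: "P ** T (outer u u) ** P = T (outer u u)"
      using inv psd_outer by (auto simp: invariant_def supported_in_def)
    have "Q ** T (outer u u) ** Q = 0"
      by (subst sup[symmetric]) (simp add: matrix_mul_assoc QP)
    moreover have "Q ** T (outer u u) ** Q = (\<Sum>N\<leftarrow>Ms. outer ((Q ** N) *v u) ((Q ** N) *v u))"
    proof -
      have "Q ** (N ** outer u u ** madj N) ** Q = outer ((Q ** N) *v u) ((Q ** N) *v u)" for N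
      proof -
        have "Q ** (N ** outer u u ** madj N) ** Q = (Q ** N) ** outer u u ** (madj N ** Q)"
          by (simp add: matrix_mul_assoc)
        also have "\<dots> = outer ((Q ** N) *v u) ((Q ** N) *v u)"
          by (simp add: outer_mult madj_mult aQ)
        finally show ?thesis .
      qed
      then show ?thesis unfolding T_eq matrix_sum_list_ldistrib matrix_sum_list_rdistrib by simp
    qed
    ultimately have "(\<Sum>N\<leftarrow>Ms. outer ((Q ** N) *v u) ((Q ** N) *v u)) = 0"
      by simp
    then have "trace (\<Sum>N\<leftarrow>Ms. outer ((Q ** N) *v u) ((Q ** N) *v u)) = 0"
      using trace_0 by simp
    then have "(\<Sum>N\<leftarrow>Ms. trace (outer ((Q ** N) *v u) ((Q ** N) *v u))) = 0"
      by (simp only: trace_sum_list)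
    then have "Re (\<Sum>N\<leftarrow>Ms. trace (outer ((Q ** N) *v u) ((Q ** N) *v u))) = 0" by simp
    then have "(\<Sum>N\<leftarrow>Ms. Re (trace (outer ((Q ** N) *v u) ((Q ** N) *v u)))) = 0"
      by (simp add: Re_sum_list)
    then have "\<forall>x\<in>set (map (\<lambda>N. Re (trace (outer ((Q ** N) *v u) ((Q ** N) *v u)))) Ms). x = 0"
      by (subst sum_list_nonneg_eq_0_iff[symmetric]) (auto simp: trace_outer_Re intro!: sum_nonneg)
    then have "Re (trace (outer ((Q ** M) *v u) ((Q ** M) *v u))) = 0" using M by auto
    then have "trace (outer ((Q ** M) *v u) ((Q ** M) *v u)) = 0" by (subst trace_outer) simp
    then have "(Q ** M) *v u = 0" by (rule trace_outer_zero)
    then show ?thesis by (simp add: u_def matrix_vector_mul_assoc)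
  qed
  then have "Q ** M ** P = 0" by (subst matrix_eq) simp
  then show ?thesis by (simp add: Q_def matrix_diff_rdistrib matrix_mul_assoc)
qed

end



lemma lin_csc: "linear (csc c)"
  by (rule linearI) (simp_all add: csc_add scaleR_csc csc_csc mult.commute)

lemma tendsto_csc0: "(f \<longlongrightarrow> 0) F \<Longrightarrow> ((\<lambda>x. csc c (f x)) \<longlongrightarrow> 0) F"
  using lin_csc[of c] unfolding linear_conv_bounded_linear by (rule bounded_linear.tendsto_zero)

lemma lin_sandwich: "linear (\<lambda>X::'n::finite cmat. (A::'n::finite cmat) ** X ** (B::'n cmat))"
  by (rule linearI) (simp_all add: matrix_add_ldistrib matrix_add_rdistrib' scaleR_csc csc_mult_left csc_mult_right)

lemma madj_herm_csc_real: "madj (csc (complex_of_real r) A) = csc (complex_of_real r) (madj A)"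
  by (simp add: madj_csc)

locale prop7 = kraus T Ms for T :: "'n::finite cmat \<Rightarrow> 'n cmat" and Ms +
  fixes PS PR :: "'n cmat" and P :: "nat \<Rightarrow> 'n cmat" and K :: nat
  assumes oPS: "orth_proj PS" and oPR: "orth_proj PR" and sumI: "PS + PR = mat 1"
    and oP: "\<forall>i<K. orth_proj (P i)"
    and orthP: "\<forall>i<K. \<forall>j<K. i \<noteq> j \<longrightarrow> P i ** P j = 0"
    and sumP: "(\<Sum>i<K. P i) = PS"
    and invP: "\<forall>i<K. invariant T (P i)"
    and gas: "GAS T PS"
begin

lemma PSPS: "PS ** PS = PS" and aPS: "madj PS = PS" and PRPR: "PR ** PR = PR" and aPR: "madj PR = PR"
  using oPS oPR by (auto simp: orth_proj_def)

lemma PR_eq: "PR = mat 1 - PS" using sumI by (simp add: algebra_simps)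

lemma PSPR: "PS ** PR = 0" by (simp add: PR_eq matrix_diff_ldistrib PSPS)
lemma PRPS: "PR ** PS = 0" by (simp add: PR_eq matrix_diff_rdistrib PSPS)

lemma M_PS: "M \<in> set Ms \<Longrightarrow> M ** PS = PS ** M ** PS"
  using inv_kraus[OF oPS] gas by (auto simp: GAS_def)

lemma PR_M_PS: "M \<in> set Ms \<Longrightarrow> PR ** M ** PS = 0"
proof -
  assume M: "M \<in> set Ms"
  have "PR ** M ** PS = PR ** (M ** PS)" by (simp add: matrix_mul_assoc)
  also have "\<dots> = (PR ** PS) ** M ** PS" by (simp add: M_PS[OF M] matrix_mul_assoc)
  finally show ?thesis by (simp add: PRPS)
qed

lemma PR_M: "M \<in> set Ms \<Longrightarrow> PR ** M = PR ** M ** PR"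
proof -
  assume M: "M \<in> set Ms"
  have "PR ** M = PR ** M ** (PS + PR)" by (simp add: sumI)
  also have "\<dots> = PR ** M ** PR" by (simp add: matrix_add_ldistrib PR_M_PS[OF M])
  finally show ?thesis .
qed

lemma conj_PR: "M \<in> set Ms \<Longrightarrow>
   PR ** (M ** X ** madj M) ** PR = (PR ** M ** PR) ** X ** madj (PR ** M ** PR)"
proof -
  assume M: "M \<in> set Ms"
  have "PR ** (M ** X ** madj M) ** PR = (PR ** M) ** X ** madj (PR ** M)"
    by (simp add: matrix_mul_assoc madj_mult aPR)
  then show ?thesis using PR_M[OF M] by simp
qed

lemma B1: "PR ** T X ** PR = PR ** T (PR ** X ** PR) ** PR"
proof -
  have "PR ** (M ** X ** madj M) ** PR = PR ** (M ** (PR ** X ** PR) ** madj M) ** PR"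
    if M: "M \<in> set Ms" for M
  proof -
    have e: "(PR ** M ** PR) ** (PR ** X ** PR) ** madj (PR ** M ** PR)
        = (PR ** M ** (PR ** PR)) ** X ** (PR ** madj (PR ** M ** PR))"
      by (simp add: matrix_mul_assoc)
    have "madj (PR ** M ** PR) = PR ** madj M ** PR"
      by (simp add: madj_mult aPR matrix_mul_assoc)
    then have e2: "PR ** madj (PR ** M ** PR) = madj (PR ** M ** PR)"
      by (simp add: matrix_mul_assoc PRPR)
    have e3: "PR ** M ** (PR ** PR) = PR ** M ** PR" by (simp add: PRPR)
    show ?thesis unfolding conj_PR[OF M] e e2 e3 ..
  qed
  then show ?thesis unfolding T_eq matrix_sum_list_ldistrib matrix_sum_list_rdistrib
    by (metis (no_types, lifting) map_eq_conv)
qed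

abbreviation R where "R \<equiv> T_R T PR"

lemma R_add: "R (A + B) = R A + R B"
  by (simp add: T_R_def T_add matrix_add_ldistrib matrix_add_rdistrib')

lemma R_diff: "R (A - B) = R A - R B"
  by (simp add: T_R_def T_diff matrix_diff_ldistrib matrix_diff_rdistrib)

lemma R_csc: "R (csc c A) = csc c (R A)"
  by (simp add: T_R_def T_csc csc_mult_left csc_mult_right)

lemma Rn_diff: "(R^^n) (A - B) = (R^^n) A - (R^^n) B"
  by (induct n) (simp_all add: R_diff)

lemma Rn: "(R^^n) (PR ** X ** PR) = PR ** (T^^n) X ** PR"
proof (induct n)
  case 0 then show ?case by simp
next
  case (Suc n)
  have "(R^^Suc n) (PR ** X ** PR) = R (PR ** (T^^n) X ** PR)" using Suc by simp
  also have "\<dots> = PR ** T ((T^^n) X) ** PR" by (simp add: T_R_def B1[symmetric])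
  finally show ?case by simp
qed

end



lemma csc_mulv: "csc c A *v w = c *s (A *v w)"
  by (simp add: csc_def matrix_vector_mult_def vec_eq_iff sum_distrib_left mult.assoc)

lemma psd_csc: "r \<ge> 0 \<Longrightarrow> psd A \<Longrightarrow> psd (csc (complex_of_real r) A)"
  by (simp add: psd_def hermitian_def madj_csc csc_mulv cinner_scale)

lemma outer_zero[simp]: "outer 0 w = 0"
  by (simp add: outer_def vec_eq_iff)

lemma polarization:
  "outer u w = csc (1/4) (\<Sum>k<4. csc (\<i>^k) (outer (u + (\<i>^k) *s w) (u + (\<i>^k) *s w)))"
  by (simp add: vec_eq_iff csc_def outer_def eval_nat_numeral lessThan_Suc algebra_simps)

lemma column_decomp: "(X::'n::finite cmat) = (\<Sum>j\<in>UNIV. outer (column j X) (axis j 1))"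
  by (simp add: vec_eq_iff outer_def column_def axis_def if_distrib if_distribR cong: if_cong)

lemma outer_density:
  assumes "v \<noteq> 0"
  shows "\<exists>\<rho> t. density \<rho> \<and> outer v v = csc (complex_of_real t) \<rho>"
proof -
  define t where "t = Re (trace (outer v v))"
  have tt: "trace (outer v v) = complex_of_real t" unfolding t_def by (rule trace_outer)
  have "t \<noteq> 0" using trace_outer_zero[of v] assms tt by auto
  moreover have "t \<ge> 0" unfolding t_def trace_outer_Re by (auto intro: sum_nonneg)
  ultimately have tp: "t > 0" by simp
  define \<rho> where "\<rho> = csc (complex_of_real (1/t)) (outer v v)"
  have "psd \<rho>" unfolding \<rho>_def using tp by (intro psd_csc psd_outer) simp
  moreover have "trace \<rho> = 1" unfolding \<rho>_def using tp by (simp add: trace_csc tt)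
  ultimately have "density \<rho>" by (simp add: density_def)
  moreover have "outer v v = csc (complex_of_real t) \<rho>"
    using tp by (simp add: \<rho>_def csc_csc flip: of_real_mult)
  ultimately show ?thesis by blast
qed

context prop7 begin

definition L where "L n X = (T^^n) X - PS ** (T^^n) X ** PS"

lemma L_add: "L n (A + B) = L n A + L n B"
  by (simp add: L_def Tn_add matrix_add_ldistrib matrix_add_rdistrib')

lemma L_csc: "L n (csc c A) = csc c (L n A)"
  by (simp add: L_def Tn_csc csc_mult_left csc_mult_right csc_diff)

lemma L_0: "L n 0 = 0"
  by (simp add: L_def Tn_0)

lemma L_sum: "finite I \<Longrightarrow> L n (\<Sum>i\<in>I. A i) = (\<Sum>i\<in>I. L n (A i))"
  by (induct I rule: finite_induct) (simp_all add: L_0 L_add)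

lemma L_lim_outer_vv: "(\<lambda>n. L n (outer v v)) \<longlonglongrightarrow> 0"
proof (cases "v = 0")
  case True then show ?thesis by (simp add: L_0)
next
  case False
  then obtain \<rho> t where d: "density \<rho>" and e: "outer v v = csc (complex_of_real t) \<rho>"
    using outer_density by blast
  have "(\<lambda>n. L n \<rho>) \<longlonglongrightarrow> 0"
    using gas d unfolding GAS_def L_def by (simp add: tendsto_norm_zero_iff)
  then show ?thesis unfolding e L_csc by (rule tendsto_csc0)
qed

lemma L_lim_outer: "(\<lambda>n. L n (outer u w)) \<longlonglongrightarrow> 0"
  apply (subst polarization)
  apply (simp only: L_csc L_sum[OF finite_lessThan])
  apply (rule tendsto_csc0)
  apply (rule tendsto_null_sum)
  apply (rule tendsto_csc0)
  apply (rule L_lim_outer_vv)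
  done

lemma L_lim: "(\<lambda>n. L n X) \<longlonglongrightarrow> 0"
  apply (subst column_decomp[of X])
  apply (simp only: L_sum[OF finite])
  apply (rule tendsto_null_sum)
  apply (rule L_lim_outer)
  done

lemma Rn_lim: assumes "PR ** B ** PR = B" shows "(\<lambda>n. (R^^n) B) \<longlonglongrightarrow> 0"
proof -
  have "(\<lambda>n. PR ** L n B ** PR) \<longlonglongrightarrow> 0"
    using lin_sandwich[of PR PR] L_lim[where X=B] unfolding linear_conv_bounded_linear
    by (rule bounded_linear.tendsto_zero)
  moreover have "PR ** L n B ** PR = (R^^n) B" for n
  proof -
    have "PR ** L n B ** PR = PR ** (T^^n) B ** PR - (PR ** PS) ** (T^^n) B ** (PS ** PR)"
      by (simp add: L_def matrix_diff_ldistrib matrix_diff_rdistrib matrix_mul_assoc)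
    also have "\<dots> = (R^^n) B" using Rn[where X=B and n=n] assms by (simp add: PRPS PSPR)
    finally show ?thesis .
  qed
  ultimately show ?thesis by simp
qed

end



context prop7 begin

abbreviation H where "H \<equiv> herm_on PR"
abbreviation f where "f \<equiv> (\<lambda>A. A - T_R T PR A)"

lemma H_sub: "subspace H"
  unfolding subspace_def herm_on_def hermitian_def
  by (auto simp: madj_add matrix_add_ldistrib matrix_add_rdistrib' scaleR_csc madj_csc
      csc_mult_left csc_mult_right)

lemma f_lin: "linear f"
  by (rule linearI) (simp_all add: R_add R_csc scaleR_csc csc_diff)

lemma R_H: "A \<in> H \<Longrightarrow> R A \<in> H"
proof -
  assume "A \<in> H"
  then have "madj A = A" by (simp add: herm_on_def hermitian_def)
  then have "madj (R A) = R A"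
    by (simp add: T_R_def madj_mult aPR T_madj matrix_mul_assoc)
  moreover have "PR ** R A ** PR = R A"
    by (simp add: T_R_def matrix_mul_assoc PRPR)
       (metis matrix_mul_assoc PRPR)
  ultimately show ?thesis by (simp add: herm_on_def hermitian_def)
qed

lemma f_H: "A \<in> H \<Longrightarrow> f A \<in> H"
  using R_H H_sub by (simp add: subspace_diff)

lemma f_inj: "inj_on f H"
proof (rule inj_onI)
  fix A B assume A: "A \<in> H" and B: "B \<in> H" and e: "f A = f B"
  define C where "C = A - B"
  have C: "C \<in> H" using A B H_sub by (simp add: C_def subspace_diff)
  have RC: "R C = C" using e by (simp add: C_def R_diff algebra_simps)
  have "(R^^n) C = C" for n by (induct n) (simp_all add: RC)
  moreover have "(\<lambda>n. (R^^n) C) \<longlonglongrightarrow> 0"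
    using C by (intro Rn_lim) (simp add: herm_on_def)
  ultimately have "C = 0" by (simp add: LIMSEQ_const_iff)
  then show "A = B" by (simp add: C_def)
qed

lemma f_bij: "bij_betw f H H"
proof -
  have sub: "f ` H \<subseteq> H" using f_H by auto
  have "dim (f ` H) = dim H"
  proof -
    have "inj_on f (span H)" using f_inj H_sub by (metis span_eq_iff)
    from dim_image_eq[OF f_lin this] show ?thesis .
  qed
  then have "f ` H = H"
    using subspace_dim_equal[OF linear_subspace_image[OF f_lin H_sub] H_sub sub] by simp
  then show ?thesis using f_inj by (simp add: bij_betw_def)
qed

end



context prop7 begin

lemma PRPR': "A ** PR ** PR = A ** PR"
  by (simp add: PRPR flip: matrix_mul_assoc)

context fixes i assumes iK: "i < K" begin

lemma PiPi: "P i ** P i = P i" and aPi: "madj (P i) = P i"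
  using oP iK by (auto simp: orth_proj_def)

lemma PiPi': "A ** P i ** P i = A ** P i"
  by (simp add: PiPi flip: matrix_mul_assoc)

lemma PiPS: "P i ** PS = P i"
proof -
  have "P i ** PS = (\<Sum>j<K. P i ** P j)" by (simp add: sumP[symmetric] matrix_sum_ldistrib)
  also have "\<dots> = (\<Sum>j<K. if j = i then P i else 0)"
    by (rule sum.cong) (use orthP iK PiPi in auto)
  also have "\<dots> = P i" using iK by simp
  finally show ?thesis .
qed

lemma PSPi: "PS ** P i = P i"
  using arg_cong[OF PiPS, of madj] by (simp add: madj_mult aPi aPS)

lemma PRPi: "PR ** P i = 0"
proof -
  have "PR ** P i = (PR ** PS) ** P i" by (simp add: PSPi flip: matrix_mul_assoc)
  then show ?thesis by (simp add: PRPS)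
qed

lemma M_Pi: "M \<in> set Ms \<Longrightarrow> M ** P i = P i ** M ** P i"
  using oP invP iK by (intro inv_kraus) auto

lemma PiMPS: assumes M: "M \<in> set Ms" shows "P i ** M ** PS = M ** P i"
proof -
  have "P i ** M ** PS = (\<Sum>j<K. P i ** M ** P j)" by (simp add: sumP[symmetric] matrix_sum_ldistrib)
  also have "\<dots> = (\<Sum>j<K. if j = i then M ** P i else 0)"
  proof (rule sum.cong)
    fix j assume j: "j \<in> {..<K}"
    have Mj: "M ** P j = P j ** M ** P j" using oP invP j M by (intro inv_kraus) auto
    have "P i ** M ** P j = P i ** (M ** P j)" by (simp add: matrix_mul_assoc)
    also have "\<dots> = (P i ** P j) ** M ** P j" by (subst Mj) (simp add: matrix_mul_assoc)
    finally have "P i ** M ** P j = (P i ** P j) ** M ** P j" .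
    moreover have "(P i ** P i) ** M ** P i = M ** P i" using M_Pi[OF M] by (simp add: PiPi)
    ultimately show "P i ** M ** P j = (if j = i then M ** P i else 0)"
      using orthP iK j by auto
  qed simp
  also have "\<dots> = M ** P i" using iK by simp
  finally show ?thesis .
qed

definition G where "G = (\<Sum>M\<leftarrow>Ms. madj M ** P i ** M)"

lemma aG: "madj G = G"
  by (simp add: G_def madj_sum_list madj_mult aPi matrix_mul_assoc)

lemma PSGPS: "PS ** G ** PS = P i"
proof -
  have "PS ** (madj M ** P i ** M) ** PS = P i ** (madj M ** M) ** P i" if M: "M \<in> set Ms" for M
  proof -
    have "PS ** (madj M ** P i ** M) ** PS = madj (P i ** M ** PS) ** (P i ** M ** PS)"
      by (simp add: madj_mult aPS aPi matrix_mul_assoc PiPi')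
    also have "\<dots> = madj (M ** P i) ** (M ** P i)" by (simp add: PiMPS[OF M])
    also have "\<dots> = P i ** (madj M ** M) ** P i" by (simp add: madj_mult aPi matrix_mul_assoc)
    finally show ?thesis .
  qed
  then have "PS ** G ** PS = (\<Sum>M\<leftarrow>Ms. P i ** (madj M ** M) ** P i)"
    unfolding G_def matrix_sum_list_ldistrib matrix_sum_list_rdistrib
    by (intro arg_cong[where f=sum_list] map_cong) auto
  also have "\<dots> = P i ** (\<Sum>M\<leftarrow>Ms. madj M ** M) ** P i"
    by (simp add: matrix_sum_list_ldistrib matrix_sum_list_rdistrib)
  also have "\<dots> = P i ** mat 1 ** P i" by (simp only: complete)
  finally show ?thesis by (simp add: PiPi)
qed

lemma PRGPS: "PR ** G ** PS = 0"
proof -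
  have "PR ** (madj M ** P i ** M) ** PS = PR ** (madj M ** M) ** P i" if M: "M \<in> set Ms" for M
  proof -
    have "PR ** (madj M ** P i ** M) ** PS = PR ** madj M ** (P i ** M ** PS)"
      by (simp add: matrix_mul_assoc)
    also have "\<dots> = PR ** (madj M ** M) ** P i" by (simp add: PiMPS[OF M] matrix_mul_assoc)
    finally show ?thesis .
  qed
  then have "PR ** G ** PS = (\<Sum>M\<leftarrow>Ms. PR ** (madj M ** M) ** P i)"
    unfolding G_def matrix_sum_list_ldistrib matrix_sum_list_rdistrib
    by (intro arg_cong[where f=sum_list] map_cong) auto
  also have "\<dots> = PR ** (\<Sum>M\<leftarrow>Ms. madj M ** M) ** P i"
    by (simp add: matrix_sum_list_ldistrib matrix_sum_list_rdistrib)
  also have "\<dots> = PR ** mat 1 ** P i" by (simp only: complete)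
  finally show ?thesis by (simp add: PRPi)
qed

lemma PSGPR: "PS ** G ** PR = 0"
  using arg_cong[OF PRGPS, of madj] by (simp add: madj_mult aPS aPR aG matrix_mul_assoc)

lemma G_eq: "G = P i + PR ** G ** PR"
proof -
  have "G = (PS + PR) ** G ** (PS + PR)" by (simp add: sumI)
  also have "\<dots> = PS ** G ** PS + PS ** G ** PR + (PR ** G ** PS + PR ** G ** PR)"
    by (simp add: matrix_add_ldistrib matrix_add_rdistrib' add.assoc)
  finally show ?thesis by (simp add: PSGPS PSGPR PRGPS)
qed

lemma E1: "trace (P i ** T Y) = trace (P i ** Y) + trace (P i ** T (PR ** Y ** PR))"
proof -
  have "trace (P i ** T Y) = trace (G ** Y)" by (simp add: trace_T G_def)
  also have "\<dots> = trace (P i ** Y) + trace (PR ** G ** PR ** Y)"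
    by (subst G_eq) (simp add: matrix_add_rdistrib' trace_add)
  also have "trace (PR ** G ** PR ** Y) = trace (G ** (PR ** Y ** PR))"
  proof -
    have "trace (PR ** G ** PR ** Y) = trace (PR ** (G ** PR ** Y))" by (simp add: matrix_mul_assoc)
    also have "\<dots> = trace ((G ** PR ** Y) ** PR)" by (rule trace_mul_sym)
    finally show ?thesis by (simp add: matrix_mul_assoc)
  qed
  also have "\<dots> = trace (P i ** T (PR ** Y ** PR))" by (simp add: trace_T G_def)
  finally show ?thesis .
qed

lemma tr_PS: "trace (P i ** (PS ** Z ** PS)) = trace (P i ** Z)"
proof -
  have "trace (P i ** (PS ** Z ** PS)) = trace ((P i ** PS ** Z) ** PS)" by (simp add: matrix_mul_assoc)
  also have "\<dots> = trace (PS ** (P i ** PS ** Z))" by (rule trace_mul_sym)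
  also have "\<dots> = trace ((PS ** P i ** PS) ** Z)" by (simp add: matrix_mul_assoc)
  finally show ?thesis by (simp add: PSPi PiPS)
qed

definition h where "h X = trace (P i ** T X)"

lemma h_diff: "h (X - Y) = h X - h Y"
  by (simp add: h_def T_diff matrix_diff_ldistrib trace_sub)

lemma h_lin: "linear h"
  by (rule linearI)
     (simp_all add: h_def T_add matrix_add_ldistrib trace_add scaleR_csc T_csc csc_mult_right
      trace_csc scaleR_conv_of_real)

lemma limit_main:
  assumes d: "density \<rho>" and B: "B \<in> H" and fB: "f B = PR ** \<rho> ** PR"
  shows "(\<lambda>n. trace (P i ** (T^^n) \<rho>)) \<longlonglongrightarrow> trace (P i ** \<rho>) + h B"
proof -
  have key: "trace (P i ** (T^^n) \<rho>) + h ((R^^n) B) = trace (P i ** \<rho>) + h B" for n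
  proof (induct n)
    case 0 then show ?case by simp
  next
    case (Suc n)
    have "PR ** (T^^n) \<rho> ** PR = (R^^n) (B - R B)"
      using Rn[where X=\<rho> and n=n] fB by simp
    also have "\<dots> = (R^^n) B - (R^^Suc n) B" by (simp add: Rn_diff funpow_swap1)
    finally have "PR ** (T^^n) \<rho> ** PR = (R^^n) B - (R^^Suc n) B" .
    then have "trace (P i ** (T^^Suc n) \<rho>) = trace (P i ** (T^^n) \<rho>) + h ((R^^n) B) - h ((R^^Suc n) B)"
      using E1[of "(T^^n) \<rho>"] by (simp add: h_diff flip: h_def)
    then show ?case using Suc by simp
  qed
  have "(\<lambda>n. h ((R^^n) B)) \<longlonglongrightarrow> 0"
    using h_lin Rn_lim[of B] B unfolding linear_conv_bounded_linear
    by (auto simp: herm_on_def intro: bounded_linear.tendsto_zero)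
  then have "(\<lambda>n. trace (P i ** \<rho>) + h B - h ((R^^n) B)) \<longlonglongrightarrow> trace (P i ** \<rho>) + h B - 0"
    by (intro tendsto_diff tendsto_const)
  moreover have "trace (P i ** \<rho>) + h B - h ((R^^n) B) = trace (P i ** (T^^n) \<rho>)" for n
    using key[of n] by (simp add: algebra_simps)
  ultimately show ?thesis by simp
qed

end

theorem main:
  shows "bij_betw f H H
    \<and> (\<forall>\<rho> i. density \<rho> \<and> i < K \<longrightarrow>
         (\<lambda>n. trace (P i ** (T^^n) \<rho>)) \<longlonglongrightarrow>
           trace (P i ** (PS ** \<rho> ** PS))
           + trace (P i ** T_SR T PS (inv_into H f (PR ** \<rho> ** PR))))"
proof (intro conjI allI impI)
  show "bij_betw f H H" by (rule f_bij)
  fix \<rho> :: "'n cmat" and i assume a: "density \<rho> \<and> i < K"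
  then have d: "density \<rho>" and iK: "i < K" by auto
  have "madj \<rho> = \<rho>" using d by (simp add: density_def psd_def hermitian_def)
  then have in_H: "PR ** \<rho> ** PR \<in> H"
    by (simp add: herm_on_def hermitian_def madj_mult aPR matrix_mul_assoc PRPR PRPR')
  have img: "f ` H = H" using f_bij by (simp add: bij_betw_def)
  define B where "B = inv_into H f (PR ** \<rho> ** PR)"
  have B: "B \<in> H" unfolding B_def using in_H img by (metis inv_into_into)
  have fB: "f B = PR ** \<rho> ** PR" unfolding B_def using in_H img by (metis f_inv_into_f)
  have "trace (P i ** T_SR T PS B) = h i B"
    by (simp add: T_SR_def tr_PS[OF iK] h_def[OF iK])
  moreover have "trace (P i ** (PS ** \<rho> ** PS)) = trace (P i ** \<rho>)" by (rule tr_PS[OF iK])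
  ultimately show "(\<lambda>n. trace (P i ** (T^^n) \<rho>)) \<longlonglongrightarrow>
           trace (P i ** (PS ** \<rho> ** PS)) + trace (P i ** T_SR T PS (inv_into H f (PR ** \<rho> ** PR)))"
    using limit_main[OF iK d B fB] by (simp add: B_def)
qed

end

theorem proposition7:
  fixes T :: "'n::finite cmat \<Rightarrow> 'n cmat"
    and PS PR :: "'n cmat" and P :: "nat \<Rightarrow> 'n cmat" and K :: nat
  assumes "cptp T"
    and "orth_proj PS" and "orth_proj PR" and "PS + PR = mat 1"
    and "K \<ge> 1"
    and "\<forall>i<K. orth_proj (P i)"
    and "\<forall>i<K. \<forall>j<K. i \<noteq> j \<longrightarrow> P i ** P j = 0"
    and "(\<Sum>i<K. P i) = PS"
    and "\<forall>i<K. invariant T (P i)"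
    and "GAS T PS"
  shows "bij_betw (\<lambda>A. A - T_R T PR A) (herm_on PR) (herm_on PR)
    \<and> (\<forall>\<rho> i. density \<rho> \<and> i < K \<longrightarrow>
         (\<lambda>n. trace (P i ** (T^^n) \<rho>)) \<longlonglongrightarrow>
           trace (P i ** (PS ** \<rho> ** PS))
           + trace (P i ** T_SR T PS
               (inv_into (herm_on PR) (\<lambda>A. A - T_R T PR A) (PR ** \<rho> ** PR))))"
proof -
  obtain Ms where T_eq: "T = (\<lambda>\<rho>. \<Sum>M\<leftarrow>Ms. M ** \<rho> ** madj M)"
    and compl: "(\<Sum>M\<leftarrow>Ms. madj M ** M) = mat 1"
    using assms(1) unfolding cptp_def by blast
  interpret prop7 T Ms PS PR P K
    by unfold_locales (use assms T_eq compl in auto)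
  show ?thesis by (rule main)
qed

end
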